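(* Let $n\ge 1$. If $1<k\le n$, then \begin{align*} \mathcal{H}_k^f(\theta_1,\dots,\theta_{2n})=\;&\mathcal{H}_k^f(\theta_3,\dots,\theta_{2n})\;\oplus\;\mathcal{H}_1^f(\theta_1,\theta_2)\otimes\mathcal{H}_{k-1}^f(\theta_3,\dots,\theta_{2n})\\ &\oplus\;\Big[\theta_1\theta_2+\frac{1}{k-n-1}\big(\theta_3\theta_4+\dots+\theta_{2n-1}\theta_{2n}\big)\Big]\mathcal{H}_{k-2}^f(\theta_3,\dots,\theta_{2n}). \end{align*} If $k=1$, then $\mathcal{H}_1^f(\theta_1,\dots,\theta_{2n})=\mathcal{H}_1^f(\theta_3,\dots,\theta_{2n})\oplus\mathcal{H}_1^f(\theta_1,\theta_2)$.
   Context: Let $\theta_1,\dots,\theta_{2n}$ be generators of the real Grassmann algebra $\Lambda_{2n}$ (anticommuting: $\theta_i\theta_j=-\theta_j\theta_i$), with Grassmann derivatives $\partial_{\theta_j}$. For a list of variables $\theta_{2a-1},\theta_{2a},\dots,\theta_{2b-1},\theta_{2b}$, the fermionic Laplacian is $\Delta_f=4\sum_{j=a}^{b}\partial_{\theta_{2j-1}}\partial_{\theta_{2j}}$, and $\mathcal{H}_k^f(\theta_{2a-1},\dots,\theta_{2b})$ denotes the space of elements of the Grassmann algebra generated by these variables which are homogeneous of degree $k$ and annihilated by this $\Delta_f$ (fermionic spherical harmonics); $\mathcal{H}_0^f$ consists of the constants. All these spaces are regarded as subspaces of $\Lambda_{2n}$. $\mathcal{H}_1^f(\theta_1,\theta_2)\otimes\mathcal{H}_{k-1}^f(\theta_3,\dots,\theta_{2n})$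 denotes the linear span of products $ab$ with $a$, $b$ in the respective spaces, and $p\,\mathcal{H}$ denotes $\{p h: h\in\mathcal{H}\}$. The sums are direct sums of subspaces. *)

theory Defs
  imports Complex_Main
begin

text \<open>Elements of the real Grassmann algebra are represented as coefficient functions
  on monomials: an element f corresponds to the sum over finite sets S of
  f S times theta_S, where theta_S is the product of the generators theta_i, i in S,
  taken in increasing order of indices. Elements of Lambda_2n are those
  supported on subsets of the index set 1..2n.\<close>

type_synonym grass = "nat set \<Rightarrow> real"

definition gzero :: grass where "gzero = (\<lambda>_. 0)"

definition gadd :: "grass \<Rightarrow> grass \<Rightarrow> grass" where
  "gadd f g = (\<lambda>S. f S + g S)"

definition gscale :: "real \<Rightarrow> grass \<Rightarrow> grass" where
  "gscale c f = (\<lambda>S. c * f S)"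

definition theta :: "nat \<Rightarrow> grass" where
  "theta i = (\<lambda>S. if S = {i} then 1 else 0)"

text \<open>Sign of the permutation sorting the concatenation of theta_A and theta_B
  (both in increasing order): (-1) to the number of inversions.\<close>
definition gsign :: "nat set \<Rightarrow> nat set \<Rightarrow> real" where
  "gsign A B = (-1) ^ card {(i, j). i \<in> A \<and> j \<in> B \<and> j < i}"

definition gmul :: "grass \<Rightarrow> grass \<Rightarrow> grass" where
  "gmul f g = (\<lambda>S. \<Sum>A\<in>Pow S. gsign A (S - A) * f A * g (S - A))"

text \<open>Left Grassmann derivative with respect to theta_j:
  it maps theta_j theta_S to theta_S (j not in S) and kills monomials without theta_j.\<close>
definition gderiv :: "nat \<Rightarrow> grass \<Rightarrow> grass" where
  "gderiv j f = (\<lambda>S. if j \<in> S then 0 else (-1) ^ card {i \<in> S. i < j} * f (insert j S))"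

definition flap :: "nat \<Rightarrow> nat \<Rightarrow> grass \<Rightarrow> grass" where
  "flap a b f = (\<lambda>S. 4 * (\<Sum>j=a..b. gderiv (2*j - 1) (gderiv (2*j) f) S))"

definition fharm :: "nat \<Rightarrow> nat \<Rightarrow> nat \<Rightarrow> grass set" where
  "fharm k a b = {f. (\<forall>S. f S \<noteq> 0 \<longrightarrow> S \<subseteq> {2*a - 1 .. 2*b} \<and> card S = k)
                       \<and> flap a b f = gzero}"

definition gspan :: "grass set \<Rightarrow> grass set" where
  "gspan X = {f. \<exists>(m::nat) (c::nat \<Rightarrow> real) (x::nat \<Rightarrow> grass). (\<forall>i<m. x i \<in> X) \<and> f = (\<lambda>S. \<Sum>i<m. c i * x i S)}"

definition dsum2 :: "grass set \<Rightarrow> grass set \<Rightarrow> grass set \<Rightarrow> bool" where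
  "dsum2 V A B \<longleftrightarrow>
     V = {gadd a b | a b. a \<in> A \<and> b \<in> B} \<and>
     (\<forall>a\<in>A. \<forall>b\<in>B. gadd a b = gzero \<longrightarrow> a = gzero \<and> b = gzero)"

definition dsum3 :: "grass set \<Rightarrow> grass set \<Rightarrow> grass set \<Rightarrow> grass set \<Rightarrow> bool" where
  "dsum3 V A B C \<longleftrightarrow>
     V = {gadd (gadd a b) c | a b c. a \<in> A \<and> b \<in> B \<and> c \<in> C} \<and>
     (\<forall>a\<in>A. \<forall>b\<in>B. \<forall>c\<in>C. gadd (gadd a b) c = gzero \<longrightarrow> a = gzero \<and> b = gzero \<and> c = gzero)"

end

theory Submission
  imports Defs
begin


definition P :: "nat \<Rightarrow> nat set" where "P j = {2*j-1, 2*j}"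

definition Lop :: "nat \<Rightarrow> nat \<Rightarrow> grass \<Rightarrow> nat set \<Rightarrow> real" where
  "Lop a b f S = (\<Sum>j\<in>{j\<in>{a..b}. P j \<inter> S = {}}. f (S \<union> P j))"

lemma dd_eq:
  assumes "j \<ge> 1"
  shows "gderiv (2*j-1) (gderiv (2*j) f) S = (if P j \<inter> S = {} then - f (S \<union> P j) else 0)"
proof (cases "2*j-1 \<in> S \<or> 2*j \<in> S")
  case True
  then show ?thesis by (auto simp: gderiv_def P_def)
next
  case False
  have e: "{i\<in>insert (2*j-1) S. i<2*j} = insert (2*j-1) {i\<in>S. i<2*j-1}"
  proof (rule set_eqI)
    fix x show "x \<in> {i\<in>insert (2*j-1) S. i<2*j} \<longleftrightarrow> x \<in> insert (2*j-1) {i\<in>S. i<2*j-1}"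
    proof
      assume h: "x \<in> {i\<in>insert (2*j-1) S. i<2*j}"
      show "x \<in> insert (2*j-1) {i\<in>S. i<2*j-1}"
      proof (cases "x = 2*j-1")
        case False
        then have "x \<in> S" "x < 2*j" using h by auto
        then show ?thesis using False by auto
      qed simp
    next
      assume "x \<in> insert (2*j-1) {i\<in>S. i<2*j-1}"
      then show "x \<in> {i\<in>insert (2*j-1) S. i<2*j}" using assms by auto
    qed
  qed
  have fin: "finite {i\<in>S. i<2*j-1}" by (rule finite_subset[of _ "{..<2*j-1}"]) auto
  have c: "card {i\<in>insert (2*j-1) S. i<2*j} = Suc (card {i\<in>S. i<2*j-1})"
    unfolding e using fin by (simp)
  have u: "insert (2*j) (insert (2*j-1) S) = S \<union> P j" by (auto simp: P_def)
  have pm: "(-1::real)^m * ((-1)^Suc m * x) = - x" for m x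
    by (induct m) auto
  have ne: "2 * j - Suc 0 \<noteq> 2 * j" "2 * j \<noteq> 2 * j - Suc 0" using assms by auto
  have nP: "P j \<inter> S = {}" using False by (auto simp: P_def)
  have "gderiv (2*j-1) (gderiv (2*j) f) S = (-1)^card{i\<in>S. i<2*j-1} * ((-1)^card{i\<in>insert (2*j-1) S. i<2*j} * f (insert (2*j) (insert (2*j-1) S)))"
    using False assms unfolding gderiv_def by (simp add: ne)
  also have "\<dots> = - f (S \<union> P j)" unfolding c u pm ..
  finally show ?thesis using nP by simp
qed

lemma flap_eq:
  assumes "1 \<le> a"
  shows "flap a b f S = -4 * Lop a b f S"
proof -
  have "(\<Sum>j=a..b. gderiv (2*j - 1) (gderiv (2*j) f) S)
      = (\<Sum>j=a..b. (if P j \<inter> S = {} then - f (S \<union> P j) else 0))"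
    using assms by (intro sum.cong refl) (rule dd_eq; auto)
  also have "\<dots> = - Lop a b f S"
    unfolding Lop_def by (simp add: sum.inter_filter[symmetric] sum_negf)
  finally show ?thesis unfolding flap_def by simp
qed

lemma flap_zero_iff:
  assumes "1 \<le> a"
  shows "flap a b f = gzero \<longleftrightarrow> (\<forall>S. Lop a b f S = 0)"
  using flap_eq[OF assms] unfolding gzero_def by (auto simp: fun_eq_iff)

definition supp :: "grass \<Rightarrow> nat \<Rightarrow> nat \<Rightarrow> nat \<Rightarrow> bool" where
  "supp f k a b \<longleftrightarrow> (\<forall>S. f S \<noteq> 0 \<longrightarrow> S \<subseteq> {2*a - 1 .. 2*b} \<and> card S = k)"

lemma fharm_iff:
  assumes "1 \<le> a"
  shows "f \<in> fharm k a b \<longleftrightarrow> supp f k a b \<and> (\<forall>S. Lop a b f S = 0)"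
  unfolding fharm_def supp_def using flap_zero_iff[OF assms] by auto


lemma gmul_inf: "infinite S \<Longrightarrow> gmul f g S = 0"
  unfolding gmul_def by simp

lemma gmul_ind:
  assumes "finite S"
  shows "gmul (\<lambda>A. if A = X then 1 else 0) h S = (if X \<subseteq> S then gsign X (S - X) * h (S - X) else 0)"
proof -
  have "gmul (\<lambda>A. if A = X then 1 else 0) h S = (\<Sum>A\<in>Pow S. if A = X then gsign X (S - X) * h (S - X) else 0)"
    unfolding gmul_def by (intro sum.cong) auto
  also have "\<dots> = (if X \<subseteq> S then gsign X (S - X) * h (S - X) else 0)"
    using assms by (subst sum.delta) auto
  finally show ?thesis .
qed

lemma gmul_gadd: "gmul (gadd f g) h = gadd (gmul f h) (gmul g h)"
  unfolding gmul_def gadd_def by (auto simp: fun_eq_iff algebra_simps sum.distrib)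

lemma gmul_gscale: "gmul (gscale c f) h = gscale c (gmul f h)"
  unfolding gmul_def gscale_def by (auto simp: fun_eq_iff algebra_simps sum_distrib_left)

lemma gmul_sum: "gmul (\<lambda>S. \<Sum>j\<in>J. f j S) h T = (\<Sum>j\<in>J. gmul (f j) h T)"
proof -
  have "gmul (\<lambda>S. \<Sum>j\<in>J. f j S) h T = (\<Sum>A\<in>Pow T. \<Sum>j\<in>J. gsign A (T - A) * f j A * h (T - A))"
    unfolding gmul_def by (simp add: sum_distrib_left sum_distrib_right)
  also have "\<dots> = (\<Sum>j\<in>J. \<Sum>A\<in>Pow T. gsign A (T - A) * f j A * h (T - A))"
    by (rule sum.swap)
  finally show ?thesis unfolding gmul_def .
qed

lemma gsign_single: "(\<forall>x\<in>B. \<not> x < i) \<Longrightarrow> gsign {i} B = 1"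
proof -
  assume a: "\<forall>x\<in>B. \<not> x < i"
  have "{(ia, j). ia = i \<and> j \<in> B \<and> j < ia} = {}" using a by auto
  then show ?thesis unfolding gsign_def singleton_iff by (simp only:) simp
qed

lemma gsign_pair:
  assumes "j \<ge> 1" "P j \<inter> B = {}"
  shows "gsign (P j) B = 1"
proof -
  define X where "X = {x\<in>B. x < 2*j-1}"
  have fX: "finite X" unfolding X_def by (rule finite_subset[of _ "{..<2*j-1}"]) auto
  have e: "{(i, x). i \<in> P j \<and> x \<in> B \<and> x < i} = ({2*j-1} \<times> X) \<union> ({2*j} \<times> X)"
  proof (rule set_eqI)
    fix z :: "nat \<times> nat"
    obtain i x where z: "z = (i, x)" by (cases z)
    have "x \<in> B \<Longrightarrow> x \<noteq> 2*j-1" "x \<in> B \<Longrightarrow> x \<noteq> 2*j" using assms(2) by (auto simp: P_def)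
    then show "z \<in> {(i, x). i \<in> P j \<and> x \<in> B \<and> x < i} \<longleftrightarrow> z \<in> ({2*j-1} \<times> X) \<union> ({2*j} \<times> X)"
      unfolding z X_def P_def using assms(1) by auto
  qed
  have d: "({2*j-1} \<times> X) \<inter> ({2*j} \<times> X) = {}" using assms(1) by auto
  have "card {(i, x). i \<in> P j \<and> x \<in> B \<and> x < i} = card X + card X"
    unfolding e using fX d by (subst card_Un_disjoint) (auto simp: card_cartesian_product)
  then show ?thesis unfolding gsign_def
    by (simp add: power_add[symmetric] mult_2[symmetric] power_mult)
qed

lemma theta_prod:
  assumes "i < j"
  shows "gmul (theta i) (theta j) = (\<lambda>S. if S = {i, j} then 1 else 0)"
proof
  fix S
  show "gmul (theta i) (theta j) S = (if S = {i, j} then 1 else 0)"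
  proof (cases "finite S")
    case False
    then show ?thesis by (auto simp: gmul_inf)
  next
    case True
    have t: "theta i = (\<lambda>A. if A = {i} then 1 else 0)" unfolding theta_def by simp
    have g: "gsign {i} {j} = 1" using assms by (intro gsign_single) auto
    show ?thesis unfolding t gmul_ind[OF True]
      using assms g by (auto simp: theta_def)
  qed
qed


definition mulP :: "nat set \<Rightarrow> grass \<Rightarrow> grass" where
  "mulP X h = (\<lambda>S. if X \<subseteq> S then h (S - X) else 0)"

definition Eop :: "nat \<Rightarrow> nat \<Rightarrow> grass \<Rightarrow> grass" where
  "Eop a b h S = (\<Sum>j\<in>{j\<in>{a..b}. P j \<subseteq> S}. h (S - P j))"

definition qq :: "real \<Rightarrow> nat \<Rightarrow> grass" where
  "qq c n = gadd (gmul (theta 1) (theta 2))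
                         (gscale c
                            (\<lambda>S. \<Sum>j=2..n. gmul (theta (2*j - 1)) (theta (2*j)) S))"

lemma theta_pair: "j \<ge> 1 \<Longrightarrow> gmul (theta (2*j - 1)) (theta (2*j)) = (\<lambda>S. if S = P j then 1 else 0)"
  by (subst theta_prod) (auto simp: P_def)

lemma gmul_pair:
  assumes "j \<ge> 1" "finite S"
  shows "gmul (gmul (theta (2*j - 1)) (theta (2*j))) h S = mulP (P j) h S"
  unfolding theta_pair[OF assms(1)] gmul_ind[OF assms(2)] mulP_def
  using gsign_pair[OF assms(1)] by auto

lemma gmul_qq:
  assumes "\<forall>S. h S \<noteq> 0 \<longrightarrow> finite S"
  shows "gmul (qq c n) h S = mulP (P 1) h S + c * Eop 2 n h S"
proof (cases "finite S")
  case False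
  have "h (S - P j) = 0" for j using assms False by (metis finite_Diff2 finite_insert finite.emptyI P_def)
  then show ?thesis using False by (simp add: gmul_inf mulP_def Eop_def)
next
  case True
  have 1: "gmul (gmul (theta 1) (theta 2)) h S = mulP (P 1) h S"
    using gmul_pair[of 1 S h] True by simp
  have "gmul (\<lambda>S. \<Sum>j=2..n. gmul (theta (2*j - 1)) (theta (2*j)) S) h S
       = (\<Sum>j=2..n. mulP (P j) h S)"
    unfolding gmul_sum using True by (intro sum.cong refl gmul_pair) auto
  also have "\<dots> = Eop 2 n h S"
    unfolding Eop_def mulP_def by (simp add: sum.inter_filter[symmetric])
  finally have 2: "gmul (\<lambda>S. \<Sum>j=2..n. gmul (theta (2*j - 1)) (theta (2*j)) S) h S = Eop 2 n h S" .
  show ?thesis unfolding qq_def gmul_gadd gmul_gscale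
    apply (unfold gadd_def gscale_def)
    apply (unfold 1 2) by (rule refl)
qed


lemma P_disj: "i \<ge> 1 \<Longrightarrow> j \<ge> 1 \<Longrightarrow> i \<noteq> j \<Longrightarrow> P i \<inter> P j = {}"
  unfolding P_def by auto

lemma P_ne: "P j \<noteq> {}" unfolding P_def by auto

lemma Lop_split:
  assumes "1 \<le> n"
  shows "Lop 1 n f T = (if P 1 \<inter> T = {} then f (T \<union> P 1) else 0) + Lop 2 n f T"
proof -
  have i: "{1..n} = insert 1 {2..n}" using assms by auto
  have e: "{j\<in>{1..n}. P j \<inter> T = {}} = (if P 1 \<inter> T = {} then insert 1 else (\<lambda>x. x)) {j\<in>{2..n}. P j \<inter> T = {}}"
    unfolding i by auto
  show ?thesis unfolding Lop_def e by auto
qed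

lemma Lop_lin: "Lop a b (\<lambda>S. \<Sum>i<m. c i * x i S) T = (\<Sum>i<m. c i * Lop a b (x i) T)"
proof -
  have "Lop a b (\<lambda>S. \<Sum>i<m. c i * x i S) T = (\<Sum>j\<in>{j\<in>{a..b}. P j \<inter> T = {}}. \<Sum>i<m. c i * x i (T \<union> P j))"
    unfolding Lop_def ..
  also have "\<dots> = (\<Sum>i<m. \<Sum>j\<in>{j\<in>{a..b}. P j \<inter> T = {}}. c i * x i (T \<union> P j))"
    by (rule sum.swap)
  finally show ?thesis unfolding Lop_def by (simp add: sum_distrib_left)
qed

lemma Lop_lin2: "Lop a b (\<lambda>S. u * f S + v * g S) T = u * Lop a b f T + v * Lop a b g T"
  unfolding Lop_def by (simp add: sum_distrib_left sum.distrib)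

lemma Lop_mulP:
  assumes "\<forall>j\<in>{a..b}. P j \<inter> X = {}"
  shows "Lop a b (mulP X f) T = (if X \<subseteq> T then Lop a b f (T - X) else 0)"
proof (cases "X \<subseteq> T")
  case True
  have e: "{j\<in>{a..b}. P j \<inter> T = {}} = {j\<in>{a..b}. P j \<inter> (T - X) = {}}"
    using assms True by blast
  have q: "(if X \<subseteq> T \<union> P j then f (T \<union> P j - X) else 0) = f ((T - X) \<union> P j)"
    if "j \<in> {j\<in>{a..b}. P j \<inter> (T - X) = {}}" for j
  proof -
    have Xf: "X \<subseteq> T \<union> P j" using True by auto
    have e2: "f (T \<union> P j - X) = f ((T - X) \<union> P j)" by (rule arg_cong[where f=f]) (use that assms in auto)
    show ?thesis by (subst if_P[OF Xf]) (rule e2)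
  qed
  have "Lop a b (mulP X f) T = Lop a b f (T - X)"
    unfolding Lop_def mulP_def e by (rule sum.cong[OF refl]) (rule q)
  then show ?thesis using True by simp
next
  case False
  have "Lop a b (mulP X f) T = 0" unfolding Lop_def mulP_def
  proof (intro sum.neutral ballI)
    fix j assume "j \<in> {j\<in>{a..b}. P j \<inter> T = {}}"
    then have "\<not> X \<subseteq> T \<union> P j" using assms False by blast
    then show "(if X \<subseteq> T \<union> P j then f (T \<union> P j - X) else 0) = 0" by simp
  qed
  then show ?thesis using False by simp
qed

lemma Lop_ext:
  assumes "\<forall>j\<in>{a..b}. P j \<inter> X = {} \<and> P j \<inter> Y = {}"
  shows "Lop a b (\<lambda>T. if Y \<inter> T = {} then f (T \<union> X) else 0) T = (if Y \<inter> T = {} then Lop a b f (T \<union> X) else 0)"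
proof (cases "Y \<inter> T = {}")
  case True
  have e: "{j\<in>{a..b}. P j \<inter> T = {}} = {j\<in>{a..b}. P j \<inter> (T \<union> X) = {}}"
    using assms True by blast
  have q: "(if Y \<inter> (T \<union> P j) = {} then f (T \<union> P j \<union> X) else 0) = f ((T \<union> X) \<union> P j)"
    if "j \<in> {j\<in>{a..b}. P j \<inter> (T \<union> X) = {}}" for j
  proof -
    have Yf: "Y \<inter> (T \<union> P j) = {}" using that assms True by auto
    have e2: "f (T \<union> P j \<union> X) = f ((T \<union> X) \<union> P j)" by (rule arg_cong[where f=f]) auto
    show ?thesis by (subst if_P[OF Yf]) (rule e2)
  qed
  have "Lop a b (\<lambda>T. if Y \<inter> T = {} then f (T \<union> X) else 0) T = Lop a b f (T \<union> X)"
    unfolding Lop_def e by (rule sum.cong[OF refl]) (rule q)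
  then show ?thesis using True by simp
next
  case False
  have "Lop a b (\<lambda>T. if Y \<inter> T = {} then f (T \<union> X) else 0) T = 0" unfolding Lop_def
  proof (intro sum.neutral ballI)
    fix j assume "j \<in> {j\<in>{a..b}. P j \<inter> T = {}}"
    have "Y \<inter> (T \<union> P j) \<noteq> {}" using False by auto
    then show "(if Y \<inter> (T \<union> P j) = {} then f (T \<union> P j \<union> X) else 0) = 0" by simp
  qed
  then show ?thesis using False by simp
qed


lemma card_count:
  assumes "1 \<le> a" "T \<subseteq> {2*a-1..2*b}"
  shows "card T + card {j\<in>{a..b}. P j \<inter> T = {}} = (b + 1 - a) + card {j\<in>{a..b}. P j \<subseteq> T}"
proof -
  have fT: "finite T" using assms(2) finite_subset by blast
  have U: "T = (\<Union>j\<in>{a..b}. T \<inter> P j)"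
  proof
    show "T \<subseteq> (\<Union>j\<in>{a..b}. T \<inter> P j)"
    proof
      fix x assume x: "x \<in> T"
      then have xr: "2*a-1 \<le> x" "x \<le> 2*b" using assms(2) by auto
      define j where "j = (x+1) div 2"
      have "x = 2*j-1 \<or> x = 2*j" unfolding j_def by presburger
      moreover have "a \<le> j" "j \<le> b" using xr assms(1) unfolding j_def by presburger+
      ultimately show "x \<in> (\<Union>j\<in>{a..b}. T \<inter> P j)" using x by (auto simp: P_def)
    qed
  qed auto
  have dj: "\<forall>i\<in>{a..b}. \<forall>j\<in>{a..b}. i \<noteq> j \<longrightarrow> (T \<inter> P i) \<inter> (T \<inter> P j) = {}"
  proof (intro ballI impI)
    fix i j assume "i \<in> {a..b}" "j \<in> {a..b}" "i \<noteq> j"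
    then have "P i \<inter> P j = {}" using assms(1) by (intro P_disj) auto
    then show "T \<inter> P i \<inter> (T \<inter> P j) = {}" by blast
  qed
  have "card (\<Union>j\<in>{a..b}. T \<inter> P j) = (\<Sum>j\<in>{a..b}. card (T \<inter> P j))"
    by (rule card_UN_disjoint) (use fT dj in auto)
  moreover have "card T = card (\<Union>j\<in>{a..b}. T \<inter> P j)" by (rule arg_cong[OF U])
  ultimately have "card T = (\<Sum>j\<in>{a..b}. card (T \<inter> P j))" by simp
  moreover have "card (T \<inter> P j) + (if P j \<inter> T = {} then 1 else 0) = 1 + (if P j \<subseteq> T then 1 else 0)"
    if "j \<ge> 1" for j
  proof -
    have ne: "2*j-1 \<noteq> 2*j" "2 * j - Suc 0 \<noteq> 2*j" using that by auto
    have cP: "card (P j) = 2" unfolding P_def using ne(1) by simp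
    consider (both) "2*j-1 \<in> T" "2*j \<in> T" | (one) "2*j-1 \<in> T" "2*j \<notin> T"
      | (two) "2*j-1 \<notin> T" "2*j \<in> T" | (none) "2*j-1 \<notin> T" "2*j \<notin> T" by blast
    then show ?thesis
    proof cases
      case both
      then have "T \<inter> P j = P j" "P j \<subseteq> T" "P j \<inter> T \<noteq> {}" unfolding P_def by blast+
      then show ?thesis using cP by simp
    next
      case one
      then have "T \<inter> P j = {2*j-1}" "\<not> P j \<subseteq> T" "P j \<inter> T \<noteq> {}" unfolding P_def using ne(1) by blast+
      then show ?thesis by simp
    next
      case two
      then have "T \<inter> P j = {2*j}" "\<not> P j \<subseteq> T" "P j \<inter> T \<noteq> {}" unfolding P_def using ne(1) by blast+
      then show ?thesis by simp
    next
      case none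
      then have "T \<inter> P j = {}" "\<not> P j \<subseteq> T" "P j \<inter> T = {}" unfolding P_def by blast+
      then show ?thesis by simp
    qed
  qed
  ultimately have "card T + (\<Sum>j\<in>{a..b}. (if P j \<inter> T = {} then 1 else 0)) = (\<Sum>j\<in>{a..b}. 1 + (if P j \<subseteq> T then 1 else 0))"
  proof -
    assume c1: "card T = (\<Sum>j\<in>{a..b}. card (T \<inter> P j))"
      and c2: "\<And>j. 1 \<le> j \<Longrightarrow> card (T \<inter> P j) + (if P j \<inter> T = {} then 1 else 0) = 1 + (if P j \<subseteq> T then 1 else 0)"
    have "card T + (\<Sum>j\<in>{a..b}. (if P j \<inter> T = {} then 1 else 0)) = (\<Sum>j\<in>{a..b}. card (T \<inter> P j) + (if P j \<inter> T = {} then 1 else 0))"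
      unfolding c1 by (rule sum.distrib[symmetric])
    also have "\<dots> = (\<Sum>j\<in>{a..b}. 1 + (if P j \<subseteq> T then 1 else 0))"
      by (rule sum.cong[OF refl], rule c2) (use assms(1) in auto)
    finally show ?thesis .
  qed
  moreover have "(\<Sum>j\<in>{a..b}. (if P j \<inter> T = {} then 1 else 0)) = card {j\<in>{a..b}. P j \<inter> T = {}}"
    by (simp add: sum.inter_filter[symmetric])
  moreover have "(\<Sum>j\<in>{a..b}. (if P j \<subseteq> T then 1 else 0)) = card {j\<in>{a..b}. P j \<subseteq> T}"
    by (simp add: sum.inter_filter[symmetric])
  moreover have "(\<Sum>j\<in>{a..b}. 1 + (if P j \<subseteq> T then 1 else 0)) = (\<Sum>j\<in>{a..b}. 1) + (\<Sum>j\<in>{a..b}. (if P j \<subseteq> T then 1 else (0::nat)))"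
    by (rule sum.distrib)
  moreover have "(\<Sum>j\<in>{a..b}. (1::nat)) = b + 1 - a" by simp
  ultimately show ?thesis by linarith
qed

lemma E_ident:
  assumes a1: "1 \<le> a" and sh: "supp h d a b" and hh: "\<forall>S. Lop a b h S = 0"
  shows "Lop a b (Eop a b h) T = (real (b + 1 - a) - real d) * h T"
proof -
  define D where "D = {j\<in>{a..b}. P j \<inter> T = {}}"
  define C where "C = {j\<in>{a..b}. P j \<subseteq> T}"
  have fD: "finite D" "finite C" unfolding D_def C_def by auto
  have s1: "Eop a b h (T \<union> P j) = h T + (\<Sum>i\<in>C. h ((T - P i) \<union> P j))" if j: "j \<in> D" for j
  proof -
    have e: "{i\<in>{a..b}. P i \<subseteq> T \<union> P j} = insert j C"
    proof (rule set_eqI)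
      fix i
      have "i \<in> {a..b} \<Longrightarrow> i \<noteq> j \<Longrightarrow> P i \<inter> P j = {}" using a1 j P_disj[of i j] unfolding D_def by auto
      then show "i \<in> {i\<in>{a..b}. P i \<subseteq> T \<union> P j} \<longleftrightarrow> i \<in> insert j C"
        using j unfolding C_def D_def by blast
    qed
    have jC: "j \<notin> C" using j P_ne unfolding C_def D_def by auto
    have t1: "T \<union> P j - P j = T" using j unfolding D_def by auto
    have t2: "T \<union> P j - P i = (T - P i) \<union> P j" if "i \<in> C" for i
    proof -
      have "i \<noteq> j" using that j jC by auto
      then have "P i \<inter> P j = {}" using that j a1 P_disj[of i j] unfolding C_def D_def by auto
      then show ?thesis by auto
    qed
    show ?thesis unfolding Eop_def e using fD jC t1 t2 by simp
  qed
  have s3: "(\<Sum>j\<in>D. h ((T - P i) \<union> P j)) = - h T" if i: "i \<in> C" for i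
  proof -
    have e: "{j\<in>{a..b}. P j \<inter> (T - P i) = {}} = insert i D"
    proof (rule set_eqI)
      fix j
      have "j \<in> {a..b} \<Longrightarrow> j \<noteq> i \<Longrightarrow> P i \<inter> P j = {}" using a1 i P_disj[of i j] unfolding C_def by auto
      then show "j \<in> {j\<in>{a..b}. P j \<inter> (T - P i) = {}} \<longleftrightarrow> j \<in> insert i D"
        using i unfolding C_def D_def by blast
    qed
    have iD: "i \<notin> D" using i P_ne unfolding C_def D_def by auto
    have t: "(T - P i) \<union> P i = T" using i unfolding C_def by auto
    have "0 = Lop a b h (T - P i)" using hh by simp
    also have "\<dots> = h T + (\<Sum>j\<in>D. h ((T - P i) \<union> P j))"
      unfolding Lop_def e using fD iD t by simp
    finally show ?thesis by simp
  qed
  have dbl: "(\<Sum>j\<in>D. \<Sum>i\<in>C. h ((T - P i) \<union> P j)) = - real (card C) * h T"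
  proof -
    have "(\<Sum>j\<in>D. \<Sum>i\<in>C. h ((T - P i) \<union> P j)) = (\<Sum>i\<in>C. \<Sum>j\<in>D. h ((T - P i) \<union> P j))"
      by (rule sum.swap)
    also have "\<dots> = (\<Sum>i\<in>C. - h T)" using s3 by (rule sum.cong[OF refl])
    finally show ?thesis by simp
  qed
  have "Lop a b (Eop a b h) T = (\<Sum>j\<in>D. h T + (\<Sum>i\<in>C. h ((T - P i) \<union> P j)))"
    unfolding Lop_def D_def[symmetric] using s1 by (rule sum.cong[OF refl])
  also have "\<dots> = real (card D) * h T + (\<Sum>j\<in>D. \<Sum>i\<in>C. h ((T - P i) \<union> P j))"
    by (simp add: sum.distrib)
  also have "\<dots> = real (card D) * h T - real (card C) * h T"
    unfolding dbl by simp
  finally have L: "Lop a b (Eop a b h) T = (real (card D) - real (card C)) * h T"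
    by (simp add: algebra_simps)
  show ?thesis
  proof (cases "h T = 0")
    case False
    then have "T \<subseteq> {2*a-1..2*b}" "card T = d" using sh unfolding supp_def by auto
    then have "d + card D = (b + 1 - a) + card C"
      using card_count[OF a1] unfolding D_def C_def by blast
    then have "real (card D) - real (card C) = real (b + 1 - a) - real d" by linarith
    then show ?thesis using L by simp
  qed (simp add: L)
qed


lemma supp_fin: "supp f k a b \<Longrightarrow> f S \<noteq> 0 \<Longrightarrow> finite S"
  unfolding supp_def using finite_subset by blast

lemma fharm_sub:
  assumes "1 \<le> n" "f \<in> fharm k 2 n"
  shows "f \<in> fharm k 1 n"
proof -
  have s: "supp f k 2 n" and L: "\<forall>S. Lop 2 n f S = 0" using assms(2) fharm_iff[of 2] by auto
  have "supp f k 1 n" using s unfolding supp_def by force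
  moreover have "Lop 1 n f T = 0" for T
  proof -
    have "f (T \<union> P 1) = 0" using s unfolding supp_def P_def by fastforce
    then show ?thesis using Lop_split[OF assms(1)] L by simp
  qed
  ultimately show ?thesis using fharm_iff[of 1] by auto
qed

lemma span_supp:
  assumes "\<forall>x\<in>X. \<forall>S. x S \<noteq> 0 \<longrightarrow> R S" "y \<in> gspan X" "y S \<noteq> 0"
  shows "R S"
proof -
  have "\<exists>(m::nat) (c::nat \<Rightarrow> real) (x::nat \<Rightarrow> grass). (\<forall>i<m. x i \<in> X) \<and> y = (\<lambda>S. \<Sum>i<m. c i * x i S)"
    using assms(2) unfolding gspan_def by simp
  then obtain m :: nat and c :: "nat \<Rightarrow> real" and x :: "nat \<Rightarrow> grass" where x: "\<forall>i<m. x i \<in> X" and y: "y = (\<lambda>S. \<Sum>i<m. c i * x i S)"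
    by blast
  have "(\<Sum>i<m. c i * x i S) \<noteq> 0" using assms(3) y by simp
  then obtain i where "i < m" "c i * x i S \<noteq> 0" by (meson lessThan_iff sum.neutral)
  then show ?thesis using assms(1) x by auto
qed

lemma span_Lop:
  assumes "\<forall>x\<in>X. \<forall>S. Lop a b x S = 0" "y \<in> gspan X"
  shows "Lop a b y S = 0"
proof -
  have "\<exists>(m::nat) (c::nat \<Rightarrow> real) (x::nat \<Rightarrow> grass). (\<forall>i<m. x i \<in> X) \<and> y = (\<lambda>S. \<Sum>i<m. c i * x i S)"
    using assms(2) unfolding gspan_def by simp
  then obtain m :: nat and c :: "nat \<Rightarrow> real" and x :: "nat \<Rightarrow> grass" where x: "\<forall>i<m. x i \<in> X" and y: "y = (\<lambda>S. \<Sum>i<m. c i * x i S)"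
    by blast
  show ?thesis unfolding y Lop_lin using x assms(1) by simp
qed

lemma span_fharm:
  assumes "1 \<le> a" "X \<subseteq> fharm k a b" "y \<in> gspan X"
  shows "y \<in> fharm k a b"
proof -
  have X: "\<forall>x\<in>X. \<forall>S. x S \<noteq> 0 \<longrightarrow> S \<subseteq> {2*a - 1 .. 2*b} \<and> card S = k"
    using assms(2) fharm_iff[OF assms(1)] unfolding supp_def by blast
  have "supp y k a b" unfolding supp_def
    using span_supp[OF X assms(3)] by blast
  moreover have "\<forall>S. Lop a b y S = 0"
    using span_Lop[OF _ assms(3)] assms(1,2) fharm_iff by blast
  ultimately show ?thesis using fharm_iff[OF assms(1)] by auto
qed

lemma fharm_lin:
  assumes "1 \<le> a" "f \<in> fharm k a b" "g \<in> fharm k a b"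
  shows "(\<lambda>S. u * f S + v * g S) \<in> fharm k a b"
proof -
  have sf: "supp f k a b" "supp g k a b" "\<forall>S. Lop a b f S = 0" "\<forall>S. Lop a b g S = 0"
    using assms fharm_iff by auto
  have "supp (\<lambda>S. u * f S + v * g S) k a b" using sf(1,2) unfolding supp_def by force
  then show ?thesis using fharm_iff[OF assms(1)] Lop_lin2 sf by auto
qed

lemma gmul_theta_small:
  assumes "i \<le> 2" "supp b d 2 n"
  shows "gmul (theta i) b = mulP {i} b"
proof
  fix S show "gmul (theta i) b S = mulP {i} b S"
  proof (cases "finite S")
    case False
    then have "b (S - {i}) = 0" using supp_fin[OF assms(2), of "S - {i}"] by auto
    then show ?thesis using False by (simp add: gmul_inf mulP_def)
  next
    case True
    have t: "theta i = (\<lambda>A. if A = {i} then 1 else 0)" unfolding theta_def by simp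
    have "gsign {i} (S - {i}) * b (S - {i}) = b (S - {i})"
    proof (cases "b (S - {i}) = 0")
      case False
      then have "S - {i} \<subseteq> {3..2*n}" using assms(2) unfolding supp_def by auto
      then have "gsign {i} (S - {i}) = 1" using assms(1) by (intro gsign_single) auto
      then show ?thesis by simp
    qed simp
    then show ?thesis unfolding t gmul_ind[OF True] mulP_def by simp
  qed
qed

lemma fharm11:
  assumes "a \<in> fharm 1 1 1"
  shows "a = gadd (gscale (a {1}) (theta 1)) (gscale (a {2}) (theta 2))"
proof
  fix A
  have s: "supp a 1 1 1" using assms fharm_iff by auto
  show "a A = gadd (gscale (a {1}) (theta 1)) (gscale (a {2}) (theta 2)) A"
  proof (cases "a A = 0")
    case False
    then have "A \<subseteq> {1..2}" "card A = 1" using s unfolding supp_def by auto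
    then obtain x where x: "A = {x}" "x \<in> {1..2}" by (metis card_1_singletonE insert_subset)
    then have "x = 1 \<or> x = 2" by auto
    then have "A = {1} \<or> A = {2}" using x by auto
    then show ?thesis by (auto simp: gadd_def gscale_def theta_def)
  next
    case True
    then show ?thesis by (auto simp: gadd_def gscale_def theta_def)
  qed
qed

lemma gmul_G:
  assumes "a \<in> fharm 1 1 1" "supp b d 2 n"
  shows "gmul a b = (\<lambda>S. a {1} * mulP {1} b S + a {2} * mulP {2} b S)"
proof -
  have t1: "gmul (theta 1) b = mulP {1} b" by (rule gmul_theta_small[OF _ assms(2)]) simp
  have t2: "gmul (theta 2) b = mulP {2} b" by (rule gmul_theta_small[OF _ assms(2)]) simp
  show ?thesis
    apply (subst fharm11[OF assms(1)])
    apply (unfold gmul_gadd gmul_gscale t1 t2)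
    apply (unfold gadd_def gscale_def) by (rule refl)
qed




lemma P1: "P 1 = {1, 2}" unfolding P_def by simp
lemma P1': "P (Suc 0) = {Suc 0, 2}" unfolding P_def by simp

lemma Pj_ge3: "j \<ge> 2 \<Longrightarrow> x \<in> P j \<Longrightarrow> x \<ge> 3"
  unfolding P_def by auto

lemma Pj_range: "1 \<le> j \<Longrightarrow> j \<le> n \<Longrightarrow> P j \<subseteq> {1..2*n}"
  unfolding P_def by auto

lemma cardP: "1 \<le> j \<Longrightarrow> card (P j) = 2"
proof -
  assume "1 \<le> j"
  then have "2*j - 1 \<noteq> 2*j" by auto
  then show ?thesis unfolding P_def by simp
qed

lemma sum_nz: "(\<Sum>j\<in>A. g j) \<noteq> (0::real) \<Longrightarrow> \<exists>j\<in>A. g j \<noteq> 0"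
  by (meson sum.neutral)

lemma mulP_supp:
  assumes "supp b d 2 n" "mulP X b S \<noteq> 0" "X \<subseteq> {1..2*n}" "finite X"
  shows "S \<subseteq> {1..2*n} \<and> card S = d + card X \<and> X \<subseteq> S \<and> S - X \<subseteq> {3..2*n}"
proof -
  have X: "X \<subseteq> S" and h: "b (S - X) \<noteq> 0" using assms(2) unfolding mulP_def by (auto split: if_splits)
  have r: "S - X \<subseteq> {3..2*n}" "card (S - X) = d" using h assms(1) unfolding supp_def by auto
  have fS: "finite S" using r(1) assms(4) by (metis finite_Diff2 finite_atLeastAtMost finite_subset)
  have "card (S - X) = card S - card X" using X assms(4) by (simp add: card_Diff_subset)
  moreover have "card X \<le> card S" using X fS by (simp add: card_mono)
  ultimately have "card S = d + card X" using r by linarith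
  moreover have "S \<subseteq> {1..2*n}" using r(1) assms(3) X by auto
  ultimately show ?thesis using X r by auto
qed

lemma Eop_P1:
  assumes "supp h d 2 n"
  shows "Eop 2 n h (T \<union> P 1) = 0"
  unfolding Eop_def
proof (intro sum.neutral ballI)
  fix j assume j: "j \<in> {j\<in>{2..n}. P j \<subseteq> T \<union> P 1}"
  have "1 \<in> T \<union> P 1 - P j" using Pj_ge3[of j 1] j by (auto simp: P1 P1')
  then have "\<not> (T \<union> P 1 - P j \<subseteq> {2*2-1..2*n})" by auto
  then show "h (T \<union> P 1 - P j) = 0" using assms unfolding supp_def by blast
qed

lemma Pj_P1: "j \<in> {2..n} \<Longrightarrow> P j \<inter> P 1 = {}"
  using P_disj[of j 1] by auto

lemma Pj_small: "j \<in> {2..n} \<Longrightarrow> i \<le> 2 \<Longrightarrow> P j \<inter> {i} = {}"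
  using Pj_ge3[of j i] by auto

lemma G_elem:
  assumes n: "1 \<le> n" and k: "1 \<le> k" and a: "a \<in> fharm 1 1 1" and b: "b \<in> fharm (k-1) 2 n"
  shows "gmul a b \<in> fharm k 1 n" "gmul a b S \<noteq> 0 \<Longrightarrow> (1 \<in> S) \<noteq> (2 \<in> S)"
proof -
  have sb: "supp b (k-1) 2 n" and Lb: "\<forall>S. Lop 2 n b S = 0" using b fharm_iff[of 2] by auto
  have g: "gmul a b = (\<lambda>S. a {1} * mulP {1} b S + a {2} * mulP {2} b S)"
    by (rule gmul_G[OF a sb])
  have ms: "S \<subseteq> {1..2*n} \<and> card S = k \<and> i \<in> S \<and> (3 - i) \<notin> S" if "mulP {i} b S \<noteq> 0" "i \<in> {1,2}" for S i
  proof -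
    have "{i} \<subseteq> {1..2*n}" using that(2) n by auto
    from mulP_supp[OF sb that(1) this] have "S \<subseteq> {1..2*n} \<and> card S = k - 1 + 1 \<and> {i} \<subseteq> S \<and> S - {i} \<subseteq> {3..2*n}" by simp
    then show ?thesis using k that(2) by auto
  qed
  have m0: "mulP {i} b S \<noteq> 0 \<Longrightarrow> S \<subseteq> {1..2*n} \<and> card S = k \<and> (1 \<in> S) \<noteq> (2 \<in> S)" if "i \<in> {1,2}" for i S
    using ms[of i S] that by auto
  have sp: "gmul a b S \<noteq> 0 \<Longrightarrow> S \<subseteq> {1..2*n} \<and> card S = k \<and> (1 \<in> S) \<noteq> (2 \<in> S)" for S
  proof -
    assume "gmul a b S \<noteq> 0"
    then have "mulP {1} b S \<noteq> 0 \<or> mulP {2} b S \<noteq> 0" unfolding g by auto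
    then show ?thesis using m0[of 1 S] m0[of 2 S] by auto
  qed
  then show "gmul a b S \<noteq> 0 \<Longrightarrow> (1 \<in> S) \<noteq> (2 \<in> S)" by blast
  have "supp (gmul a b) k 1 n" unfolding supp_def using sp by auto
  moreover have "Lop 1 n (gmul a b) T = 0" for T
  proof -
    have z1: "mulP {i} b (T \<union> P 1) = 0" if "i \<in> {1,2}" for i
    proof (rule ccontr)
      assume "mulP {i} b (T \<union> P 1) \<noteq> 0"
      from ms[OF this that] have "3 - i \<notin> T \<union> P 1" by blast
      moreover have "3 - i \<in> P 1" using that by (auto simp: P1 P1')
      ultimately show False by blast
    qed
    have z2: "Lop 2 n (mulP {i} b) T = 0" if "i \<le> 2" for i
    proof -
      have "\<forall>j\<in>{2..n}. P j \<inter> {i} = {}" using Pj_small that by blast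
      then show ?thesis using Lop_mulP[of 2 n "{i}" b T] Lb by simp
    qed
    have "Lop 2 n (gmul a b) T = a {1} * Lop 2 n (mulP {1} b) T + a {2} * Lop 2 n (mulP {2} b) T"
      unfolding g by (rule Lop_lin2)
    then have "Lop 2 n (gmul a b) T = 0" using z2[of 1] z2[of 2] by simp
    moreover have "gmul a b (T \<union> P 1) = 0" unfolding g using z1[of 1] z1[of 2] by simp
    ultimately show ?thesis using Lop_split[OF n, of "gmul a b" T] by simp
  qed
  ultimately show "gmul a b \<in> fharm k 1 n" using fharm_iff[of 1] by auto
qed


lemma pair_supp:
  assumes "supp h d 2 n" "1 \<le> j" "j \<le> n" "P j \<subseteq> S" "h (S - P j) \<noteq> 0"
  shows "S \<subseteq> {1..2*n} \<and> card S = d + 2"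
proof -
  have "mulP (P j) h S \<noteq> 0" using assms(4,5) unfolding mulP_def by simp
  from mulP_supp[OF assms(1) this Pj_range[OF assms(2,3)]] show ?thesis
    using cardP[OF assms(2)] by (simp add: P_def)
qed

definition cc :: "nat \<Rightarrow> nat \<Rightarrow> real" where "cc k n = 1 / (real k - real n - 1)"

lemma Q_formula:
  assumes "supp h d 2 n"
  shows "gmul (qq c n) h = (\<lambda>S. 1 * mulP (P 1) h S + c * Eop 2 n h S)"
  using gmul_qq[of h c n] supp_fin[OF assms] by auto

lemma Q_elem:
  assumes n: "1 \<le> n" and k: "2 \<le> k" "k \<le> n" and h: "h \<in> fharm (k-2) 2 n"
  shows "gmul (qq (cc k n) n) h \<in> fharm k 1 n"
proof -
  have sh: "supp h (k-2) 2 n" and Lh: "\<forall>S. Lop 2 n h S = 0" using h fharm_iff[of 2] by auto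
  define c where "c = cc k n"
  have g: "gmul (qq c n) h = (\<lambda>S. 1 * mulP (P 1) h S + c * Eop 2 n h S)"
    by (rule Q_formula[OF sh])
  have sp: "S \<subseteq> {1..2*n} \<and> card S = k" if nz: "gmul (qq c n) h S \<noteq> 0" for S
  proof -
    have "mulP (P 1) h S \<noteq> 0 \<or> Eop 2 n h S \<noteq> 0" using nz unfolding g by auto
    then obtain j where j: "1 \<le> j" "j \<le> n" "P j \<subseteq> S" "h (S - P j) \<noteq> 0"
    proof
      assume "mulP (P 1) h S \<noteq> 0"
      then show ?thesis using that[of 1] n unfolding mulP_def by (auto split: if_splits)
    next
      assume "Eop 2 n h S \<noteq> 0"
      then obtain j where "j \<in> {j\<in>{2..n}. P j \<subseteq> S}" "h (S - P j) \<noteq> 0"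
        unfolding Eop_def using sum_nz by blast
      then show ?thesis using that[of j] by auto
    qed
    from pair_supp[OF sh j] show ?thesis using k by auto
  qed
  have "supp (gmul (qq c n) h) k 1 n" unfolding supp_def using sp by auto
  moreover have "Lop 1 n (gmul (qq c n) h) T = 0" for T
  proof -
    have d1: "\<forall>j\<in>{2..n}. P j \<inter> P 1 = {}" using Pj_P1 by blast
    have "Lop 2 n (mulP (P 1) h) T = 0"
      using Lop_mulP[OF d1, of h T] Lh by simp
    moreover have "Lop 2 n (Eop 2 n h) T = (real (n + 1 - 2) - real (k - 2)) * h T"
      by (rule E_ident[OF _ sh Lh]) simp
    ultimately have L2: "Lop 2 n (gmul (qq c n) h) T = c * ((real (n + 1 - 2) - real (k - 2)) * h T)"
      unfolding g Lop_lin2 by simp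
    have r: "real (n + 1 - 2) - real (k - 2) = real n - real k + 1" using n k by auto
    have cr: "c * (real n - real k + 1) = -1"
      unfolding c_def cc_def using k by (simp add: field_simps)
    show ?thesis
    proof (cases "P 1 \<inter> T = {}")
      case True
      have "gmul (qq c n) h (T \<union> P 1) = h T"
      proof -
        have "mulP (P 1) h (T \<union> P 1) = h T" unfolding mulP_def using True
          by (auto intro!: arg_cong[where f=h])
        then show ?thesis unfolding g using Eop_P1[OF sh, of T] by simp
      qed
      then have "Lop 1 n (gmul (qq c n) h) T = h T + c * ((real n - real k + 1) * h T)"
        using Lop_split[OF n, of "gmul (qq c n) h" T] True L2 r by simp
      also have "\<dots> = h T + (c * (real n - real k + 1)) * h T" by (simp only: mult.assoc)
      also have "\<dots> = 0" unfolding cr by simp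
      finally show ?thesis .
    next
      case False
      then have "\<not> T \<subseteq> {3..2*n}" by (auto simp: P1 P1')
      then have "h T = 0" using sh unfolding supp_def by auto
      then show ?thesis using Lop_split[OF n, of "gmul (qq c n) h" T] False L2 by simp
    qed
  qed
  ultimately show ?thesis unfolding c_def using fharm_iff[of 1] by auto
qed

lemma theta_fharm: "i \<in> {1,2} \<Longrightarrow> theta i \<in> fharm 1 1 1"
proof -
  assume i: "i \<in> {1,2}"
  have "supp (theta i) 1 1 1" unfolding supp_def theta_def using i by auto
  moreover have "Lop 1 1 (theta i) T = 0" for T
    unfolding Lop_def theta_def
  proof (intro sum.neutral ballI)
    fix j assume "j \<in> {j\<in>{1..1}. P j \<inter> T = {}}"
    then have "j = 1" by auto
    then have "T \<union> P j \<noteq> {i}" by (auto simp: P1 P1')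
    then show "(if T \<union> P j = {i} then 1 else 0) = 0" by simp
  qed
  ultimately show ?thesis using fharm_iff[of 1] by auto
qed

lemma G_sub:
  assumes "1 \<le> n" "1 \<le> k" "y \<in> gspan {gmul a b | a b. a \<in> fharm 1 1 1 \<and> b \<in> fharm (k - 1) 2 n}"
  shows "y \<in> fharm k 1 n" "y S \<noteq> 0 \<Longrightarrow> (1 \<in> S) \<noteq> (2 \<in> S)"
proof -
  have X: "{gmul a b | a b. a \<in> fharm 1 1 1 \<and> b \<in> fharm (k - 1) 2 n} \<subseteq> fharm k 1 n"
    using G_elem(1)[OF assms(1,2)] by blast
  show "y \<in> fharm k 1 n" by (rule span_fharm[OF _ X assms(3)]) simp
  have R: "\<forall>x\<in>{gmul a b | a b. a \<in> fharm 1 1 1 \<and> b \<in> fharm (k - 1) 2 n}. \<forall>S. x S \<noteq> 0 \<longrightarrow> (1 \<in> S) \<noteq> (2 \<in> S)"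
    using G_elem(2)[OF assms(1,2)] by blast
  show "y S \<noteq> 0 \<Longrightarrow> (1 \<in> S) \<noteq> (2 \<in> S)" using span_supp[OF R assms(3)] by blast
qed


lemma avoidP1:
  assumes "T \<subseteq> {1..2*n}" "P 1 \<inter> T = {}"
  shows "T \<subseteq> {3..2*n}"
proof
  fix x assume x: "x \<in> T"
  then have "1 \<le> x" "x \<le> 2*n" using assms(1) by auto
  moreover have "x \<noteq> 1" "x \<noteq> 2" using x assms(2) by (auto simp: P1 P1')
  ultimately show "x \<in> {3..2*n}" by auto
qed

lemma Lop2_zero:
  assumes "1 \<le> n" "\<forall>S. Lop 1 n f S = 0" "P 1 \<inter> S \<noteq> {}"
  shows "Lop 2 n f S = 0"
  using Lop_split[OF assms(1), of f S] assms(2,3) by simp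

lemma gadd_lin: "gadd f g = (\<lambda>S. 1 * f S + 1 * g S)"
  unfolding gadd_def by simp

lemma fharm_gadd: "f \<in> fharm k 1 n \<Longrightarrow> g \<in> fharm k 1 n \<Longrightarrow> gadd f g \<in> fharm k 1 n"
  unfolding gadd_lin by (rule fharm_lin) auto

lemma decomp:
  assumes n: "1 \<le> n" and k: "1 < k" "k \<le> n" and f: "f \<in> fharm k 1 n"
  shows "\<exists>x y z. x \<in> fharm k 2 n \<and>
     y \<in> gspan {gmul a b | a b. a \<in> fharm 1 1 1 \<and> b \<in> fharm (k - 1) 2 n} \<and>
     z \<in> {gmul (qq (cc k n) n) h | h. h \<in> fharm (k - 2) 2 n} \<and> f = gadd (gadd x y) z"
proof -
  have sf: "supp f k 1 n" and Lf: "\<forall>S. Lop 1 n f S = 0" using f fharm_iff[of 1] by auto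
  define C where "C = (\<lambda>T. if P 1 \<inter> T = {} then f (T \<union> P 1) else 0)"
  define B where "B = (\<lambda>i T. if P 1 \<inter> T = {} then f (T \<union> {i}) else 0)"
  have d1: "\<forall>j\<in>{2..n}. P j \<inter> P 1 = {} \<and> P j \<inter> P 1 = {}" using Pj_P1 by blast
  have C: "C \<in> fharm (k-2) 2 n"
  proof -
    have "supp C (k-2) 2 n" unfolding supp_def
    proof (intro allI impI)
      fix T assume "C T \<noteq> 0"
      then have T: "P 1 \<inter> T = {}" "f (T \<union> P 1) \<noteq> 0" unfolding C_def by (auto split: if_splits)
      then have r: "T \<union> P 1 \<subseteq> {1..2*n}" "card (T \<union> P 1) = k" using sf unfolding supp_def by auto
      have fT: "finite T" using r(1) finite_subset by blast
      have "card (T \<union> P 1) = card T + 2" using T(1) fT cardP[of 1]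
        by (subst card_Un_disjoint) (auto simp: P_def)
      moreover have "T \<subseteq> {3..2*n}" using r(1) T(1) avoidP1 by blast
      ultimately show "T \<subseteq> {2*2 - 1 .. 2*n} \<and> card T = k - 2" using r by auto
    qed
    moreover have "Lop 2 n C T = 0" for T
      unfolding C_def Lop_ext[OF d1]
      using Lop2_zero[OF n Lf, of "T \<union> P 1"] by (auto simp: P1 P1')
    ultimately show ?thesis using fharm_iff[of 2] by auto
  qed
  have Bh: "B i \<in> fharm (k-1) 2 n" if i: "i \<in> {1,2}" for i
  proof -
    have "supp (B i) (k-1) 2 n" unfolding supp_def
    proof (intro allI impI)
      fix T assume "B i T \<noteq> 0"
      then have T: "P 1 \<inter> T = {}" "f (T \<union> {i}) \<noteq> 0" unfolding B_def by (auto split: if_splits)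
      then have r: "T \<union> {i} \<subseteq> {1..2*n}" "card (T \<union> {i}) = k" using sf unfolding supp_def by auto
      have fT: "finite T" using r(1) finite_subset by blast
      have iT: "i \<notin> T" using T(1) i by (auto simp: P1 P1')
      have "card (T \<union> {i}) = card T + 1" using iT fT by simp
      moreover have "T \<subseteq> {3..2*n}" using r(1) T(1) avoidP1 by blast
      ultimately show "T \<subseteq> {2*2 - 1 .. 2*n} \<and> card T = k - 1" using r by auto
    qed
    moreover have "Lop 2 n (B i) T = 0" for T
    proof -
      have d: "\<forall>j\<in>{2..n}. P j \<inter> {i} = {} \<and> P j \<inter> P 1 = {}"
      proof
        fix j assume j: "j \<in> {2..n}"
        show "P j \<inter> {i} = {} \<and> P j \<inter> P 1 = {}" using Pj_P1[OF j] Pj_small[OF j] i by auto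
      qed
      have "P 1 \<inter> (T \<union> {i}) \<noteq> {}" using i by (auto simp: P1 P1')
      then show ?thesis unfolding B_def Lop_ext[OF d]
        using Lop2_zero[OF n Lf, of "T \<union> {i}"] by auto
    qed
    ultimately show ?thesis using fharm_iff[of 2] by auto
  qed
  have sB: "supp (B i) (k-1) 2 n" if "i \<in> {1,2}" for i using Bh[OF that] fharm_iff[of 2] by auto
  define y where "y = gadd (gmul (theta 1) (B 1)) (gmul (theta 2) (B 2))"
  define G where "G = {gmul a b | a b. a \<in> fharm 1 1 1 \<and> b \<in> fharm (k - 1) 2 n}"
  have yG: "y \<in> gspan G"
  proof -
    define xs where "xs = (\<lambda>i::nat. if i = 0 then gmul (theta 1) (B 1) else gmul (theta 2) (B 2))"
    have g1: "gmul (theta 1) (B 1) \<in> G" unfolding G_def using theta_fharm[of 1] Bh[of 1] by blast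
    have g2: "gmul (theta 2) (B 2) \<in> G" unfolding G_def using theta_fharm[of 2] Bh[of 2] by blast
    have A1: "\<forall>i<2. xs i \<in> G" unfolding xs_def using g1 g2 by simp
    have two: "{..<2::nat} = {0,1}" by auto
    have A2: "y = (\<lambda>S. \<Sum>i<2. (\<lambda>_. 1) i * xs i S)"
      unfolding y_def xs_def gadd_def two by (rule ext) simp
    show ?thesis unfolding gspan_def mem_Collect_eq
      by (rule exI[of _ 2], rule exI[of _ "\<lambda>_. 1"], rule exI[of _ xs]) (use A1 A2 in simp)
  qed
  have yH: "y \<in> fharm k 1 n" using G_sub(1)[OF n _ yG[unfolded G_def]] k by auto
  have t1: "gmul (theta 1) (B 1) = mulP {1} (B 1)" by (rule gmul_theta_small) (auto intro: sB)
  have t2: "gmul (theta 2) (B 2) = mulP {2} (B 2)" by (rule gmul_theta_small) (auto intro: sB)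
  have yv: "y S = mulP {1} (B 1) S + mulP {2} (B 2) S" for S
    unfolding y_def gadd_def t1 t2 by simp
  define z where "z = gmul (qq (cc k n) n) C"
  have zQ: "z \<in> {gmul (qq (cc k n) n) h | h. h \<in> fharm (k - 2) 2 n}" unfolding z_def using C by blast
  have zH: "z \<in> fharm k 1 n" unfolding z_def by (rule Q_elem[OF n _ k(2) C]) (use k in auto)
  have sC: "supp C (k-2) 2 n" using C fharm_iff[of 2] by auto
  have zv: "z S = 1 * mulP (P 1) C S + cc k n * Eop 2 n C S" for S
    unfolding z_def Q_formula[OF sC] by simp
  define x where "x = (\<lambda>S. 1 * (\<lambda>S. 1 * f S + (-1) * y S) S + (-1) * z S)"
  have xH: "x \<in> fharm k 1 n" unfolding x_def
    by (intro fharm_lin f yH zH) simp_all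
  have van: "x S = 0" if S: "P 1 \<inter> S \<noteq> {}" for S
  proof -
    have E0: "Eop 2 n C S = 0" unfolding Eop_def
    proof (intro sum.neutral ballI)
      fix j assume "j \<in> {j\<in>{2..n}. P j \<subseteq> S}"
      then have "P 1 \<inter> (S - P j) \<noteq> {}" using S Pj_P1[of j n] by auto
      then show "C (S - P j) = 0" unfolding C_def by simp
    qed
    have m1: "mulP {1} (B 1) S = (if 1 \<in> S \<and> 2 \<notin> S then f S else 0)"
    proof (cases "1 \<in> S")
      case True
      have "P 1 \<inter> (S - {1}) = {} \<longleftrightarrow> 2 \<notin> S" by (auto simp: P1 P1')
      moreover have "S - {1} \<union> {1} = S" using True by auto
      ultimately show ?thesis unfolding mulP_def B_def using True by simp
    qed (simp add: mulP_def)
    have m2: "mulP {2} (B 2) S = (if 2 \<in> S \<and> 1 \<notin> S then f S else 0)"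
    proof (cases "2 \<in> S")
      case True
      have "P 1 \<inter> (S - {2}) = {} \<longleftrightarrow> 1 \<notin> S" by (auto simp: P1 P1')
      moreover have "S - {2} \<union> {2} = S" using True by auto
      ultimately show ?thesis unfolding mulP_def B_def using True by simp
    qed (simp add: mulP_def)
    have mc: "mulP (P 1) C S = (if 1 \<in> S \<and> 2 \<in> S then f S else 0)"
    proof (cases "P 1 \<subseteq> S")
      case True
      have "P 1 \<inter> (S - P 1) = {}" by auto
      moreover have "S - P 1 \<union> P 1 = S" using True by auto
      ultimately show ?thesis unfolding mulP_def C_def using True by (simp add: P1 P1')
    next
      case False
      then show ?thesis unfolding mulP_def by (auto simp: P1 P1')
    qed
    have "1 \<in> S \<or> 2 \<in> S" using S by (auto simp: P1 P1')
    then show ?thesis unfolding x_def using yv[of S] zv[of S] E0 m1 m2 mc by auto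
  qed
  have xH2: "x \<in> fharm k 2 n"
  proof -
    have sx: "supp x k 1 n" and Lx: "\<forall>S. Lop 1 n x S = 0" using xH fharm_iff[of 1] by auto
    have "supp x k 2 n" unfolding supp_def
    proof (intro allI impI)
      fix S assume nz: "x S \<noteq> 0"
      then have "P 1 \<inter> S = {}" using van by blast
      moreover have "S \<subseteq> {1..2*n}" "card S = k" using nz sx unfolding supp_def by auto
      ultimately show "S \<subseteq> {2*2 - 1 .. 2*n} \<and> card S = k" using avoidP1[of S n] by auto
    qed
    moreover have "Lop 2 n x T = 0" for T
    proof -
      have h0: "x (T \<union> P 1) = 0" by (rule van) (auto simp: P1 P1')
      have a: "(if P 1 \<inter> T = {} then x (T \<union> P 1) else 0) = 0" by (simp only: h0 if_cancel)
      have "Lop 1 n x T = (if P 1 \<inter> T = {} then x (T \<union> P 1) else 0) + Lop 2 n x T" by (rule Lop_split[OF n])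
      then have "Lop 1 n x T = Lop 2 n x T" unfolding a by simp
      then show ?thesis using Lx by simp
    qed
    ultimately show ?thesis using fharm_iff[of 2] by auto
  qed
  have "f = gadd (gadd x y) z" unfolding x_def gadd_def by auto
  then show ?thesis using xH2 yG zQ unfolding G_def by blast
qed


lemma notJ: "1 \<in> S \<or> 2 \<in> S \<Longrightarrow> \<not> S \<subseteq> {3..(m::nat)}"
  by auto

lemma uniq:
  assumes n: "1 \<le> n" and k: "1 < k" "k \<le> n" and x: "x \<in> fharm k 2 n"
    and y: "y \<in> gspan {gmul a b | a b. a \<in> fharm 1 1 1 \<and> b \<in> fharm (k - 1) 2 n}"
    and h: "h \<in> fharm (k - 2) 2 n"
    and e: "gadd (gadd x y) (gmul (qq (cc k n) n) h) = gzero"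
  shows "x = gzero \<and> y = gzero \<and> gmul (qq (cc k n) n) h = gzero"
proof -
  have sx: "supp x k 2 n" using x fharm_iff[of 2] by auto
  have sh: "supp h (k-2) 2 n" using h fharm_iff[of 2] by auto
  have yS: "y S \<noteq> 0 \<Longrightarrow> (1 \<in> S) \<noteq> (2 \<in> S)" for S using G_sub(2)[OF n _ y] k by auto
  define z where "z = gmul (qq (cc k n) n) h"
  have zv: "z S = 1 * mulP (P 1) h S + cc k n * Eop 2 n h S" for S
    unfolding z_def Q_formula[OF sh] by simp
  have e': "x S + y S + z S = 0" for S
    using fun_cong[OF e, of S] unfolding z_def gadd_def gzero_def by simp
  have x0: "x S = 0" if "1 \<in> S \<or> 2 \<in> S" for S
    using sx notJ[OF that, of "2*n"] unfolding supp_def by auto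
  have h0: "h T = 0" for T
  proof (cases "P 1 \<inter> T = {}")
    case True
    have S: "1 \<in> T \<union> P 1" "2 \<in> T \<union> P 1" by (auto simp: P1 P1')
    have "y (T \<union> P 1) = 0" using yS S by blast
    moreover have "x (T \<union> P 1) = 0" using x0 S by blast
    moreover have "mulP (P 1) h (T \<union> P 1) = h T" unfolding mulP_def using True
      by (auto intro!: arg_cong[where f=h])
    ultimately show ?thesis using e'[of "T \<union> P 1"] zv[of "T \<union> P 1"] Eop_P1[OF sh, of T] by simp
  next
    case False
    then have "1 \<in> T \<or> 2 \<in> T" by (auto simp: P1 P1')
    then show ?thesis using sh notJ[of T "2*n"] unfolding supp_def by auto
  qed
  have z0: "z S = 0" for S
    unfolding zv mulP_def Eop_def using h0 by simp
  have y0: "y S = 0" for S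
  proof (cases "1 \<in> S \<or> 2 \<in> S")
    case True
    then show ?thesis using e'[of S] z0[of S] x0[OF True] by simp
  next
    case False
    then show ?thesis using yS by blast
  qed
  have "x S = 0" for S using e'[of S] z0[of S] y0[of S] by simp
  then show ?thesis using y0 z0 unfolding z_def gzero_def by (auto simp: fun_eq_iff)
qed

lemma fharm1_iff:
  assumes "1 \<le> a"
  shows "f \<in> fharm 1 a b \<longleftrightarrow> supp f 1 a b"
proof -
  have "Lop a b f T = 0" if s: "supp f 1 a b" for T
    unfolding Lop_def
  proof (intro sum.neutral ballI)
    fix j assume j: "j \<in> {j\<in>{a..b}. P j \<inter> T = {}}"
    show "f (T \<union> P j) = 0"
    proof (rule ccontr)
      assume "f (T \<union> P j) \<noteq> 0"
      then have r: "T \<union> P j \<subseteq> {2*a-1..2*b}" "card (T \<union> P j) = 1" using s unfolding supp_def by auto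
      have "finite (T \<union> P j)" using r(1) finite_subset by blast
      then have "card (P j) \<le> card (T \<union> P j)" by (intro card_mono) auto
      moreover have "card (P j) = 2" using j assms by (intro cardP) auto
      ultimately show False using r by simp
    qed
  qed
  then show ?thesis using fharm_iff[OF assms] by auto
qed

lemma k1:
  assumes n: "1 \<le> n"
  shows "dsum2 (fharm 1 1 n) (fharm 1 2 n) (fharm 1 1 1)"
proof -
  have F1: "f \<in> fharm 1 1 n \<longleftrightarrow> supp f 1 1 n" for f by (rule fharm1_iff) simp
  have F2: "f \<in> fharm 1 2 n \<longleftrightarrow> supp f 1 2 n" for f by (rule fharm1_iff) simp
  have F3: "f \<in> fharm 1 1 1 \<longleftrightarrow> supp f 1 1 1" for f by (rule fharm1_iff) simp
  have bS: "S \<subseteq> {1..2}" if c1: "card S = 1" and c2: "P 1 \<inter> S \<noteq> {}" for S :: "nat set"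
  proof -
    obtain s where "S = {s}" using c1 card_1_singletonE by blast
    then show ?thesis using c2 by (auto simp: P1 P1')
  qed
  have sub: "fharm 1 1 n \<subseteq> {gadd a b | a b. a \<in> fharm 1 2 n \<and> b \<in> fharm 1 1 1}"
  proof
    fix f assume "f \<in> fharm 1 1 n"
    then have sf: "supp f 1 1 n" using F1 by auto
    define a where "a = (\<lambda>S. if P 1 \<inter> S = {} then f S else 0)"
    define b where "b = (\<lambda>S. if P 1 \<inter> S = {} then 0 else f S)"
    have "supp a 1 2 n" unfolding supp_def
    proof (intro allI impI)
      fix S assume "a S \<noteq> 0"
      then have "P 1 \<inter> S = {}" "f S \<noteq> 0" unfolding a_def by (auto split: if_splits)
      then show "S \<subseteq> {2*2 - 1 .. 2*n} \<and> card S = 1" using sf avoidP1[of S n] unfolding supp_def by auto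
    qed
    moreover have "supp b 1 1 1" unfolding supp_def
    proof (intro allI impI)
      fix S assume "b S \<noteq> 0"
      then have "P 1 \<inter> S \<noteq> {}" "f S \<noteq> 0" unfolding b_def by (auto split: if_splits)
      then show "S \<subseteq> {2*1 - 1 .. 2*1} \<and> card S = 1" using sf bS unfolding supp_def by auto
    qed
    moreover have "f = gadd a b" unfolding gadd_def a_def b_def by auto
    ultimately show "f \<in> {gadd a b | a b. a \<in> fharm 1 2 n \<and> b \<in> fharm 1 1 1}" using F2 F3 by blast
  qed
  have sup: "gadd a b \<in> fharm 1 1 n" if "a \<in> fharm 1 2 n" "b \<in> fharm 1 1 1" for a b
  proof -
    have sa: "supp a 1 2 n" and sb: "supp b 1 1 1" using that F2 F3 by auto
    have "supp (gadd a b) 1 1 n" unfolding supp_def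
    proof (intro allI impI)
      fix S assume "gadd a b S \<noteq> 0"
      then have "a S \<noteq> 0 \<or> b S \<noteq> 0" unfolding gadd_def by auto
      then show "S \<subseteq> {2*1 - 1 .. 2*n} \<and> card S = 1"
        using sa sb n unfolding supp_def by force
    qed
    then show ?thesis using F1 by auto
  qed
  have un: "a = gzero \<and> b = gzero" if "a \<in> fharm 1 2 n" "b \<in> fharm 1 1 1" "gadd a b = gzero" for a b
  proof -
    have sa: "supp a 1 2 n" and sb: "supp b 1 1 1" using that F2 F3 by auto
    have e: "a S + b S = 0" for S using fun_cong[OF that(3), of S] unfolding gadd_def gzero_def by simp
    have b0: "b S = 0" for S
    proof (rule ccontr)
      assume nb: "b S \<noteq> 0"
      then have "S \<subseteq> {1..2}" "card S = 1" using sb unfolding supp_def by auto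
      then have "1 \<in> S \<or> 2 \<in> S" by (metis One_nat_def atLeastAtMost_iff card_1_singletonE insertI1 le_Suc_eq numeral_2_eq_2 subset_iff le_antisym)
      then have "a S = 0" using sa notJ[of S "2*n"] unfolding supp_def by auto
      then show False using e[of S] nb by simp
    qed
    then show ?thesis using e unfolding gzero_def by (auto simp: fun_eq_iff)
  qed
  show ?thesis unfolding dsum2_def using sub sup un by blast
qed


theorem mainTheorem3:
  fixes n k :: nat
  assumes "n \<ge> 1"
  shows "(1 < k \<and> k \<le> n \<longrightarrow>
           dsum3 (fharm k 1 n)
             (fharm k 2 n)
             (gspan {gmul a b | a b. a \<in> fharm 1 1 1 \<and> b \<in> fharm (k - 1) 2 n})
             {gmul (gadd (gmul (theta 1) (theta 2))
                         (gscale (1 / (real k - real n - 1))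
                            (\<lambda>S. \<Sum>j=2..n. gmul (theta (2*j - 1)) (theta (2*j)) S))) h
               | h. h \<in> fharm (k - 2) 2 n})
       \<and> (k = 1 \<longrightarrow> dsum2 (fharm 1 1 n) (fharm 1 2 n) (fharm 1 1 1))"
proof -
  have qeq: "gadd (gmul (theta 1) (theta 2))
                         (gscale (1 / (real k - real n - 1))
                            (\<lambda>S. \<Sum>j=2..n. gmul (theta (2*j - 1)) (theta (2*j)) S)) = qq (cc k n) n"
    unfolding qq_def cc_def ..
  show ?thesis unfolding qeq
  proof (intro conjI impI)
    assume kk: "1 < k \<and> k \<le> n"
    let ?G = "gspan {gmul a b | a b. a \<in> fharm 1 1 1 \<and> b \<in> fharm (k - 1) 2 n}"
    let ?Q = "{gmul (qq (cc k n) n) h | h. h \<in> fharm (k - 2) 2 n}"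
    have s1: "fharm k 1 n \<subseteq> {gadd (gadd a b) c | a b c. a \<in> fharm k 2 n \<and> b \<in> ?G \<and> c \<in> ?Q}"
    proof
      fix f assume "f \<in> fharm k 1 n"
      from decomp[OF assms _ _ this] kk obtain x y z where
        "x \<in> fharm k 2 n" "y \<in> ?G" "z \<in> ?Q" "f = gadd (gadd x y) z" by blast
      then show "f \<in> {gadd (gadd a b) c | a b c. a \<in> fharm k 2 n \<and> b \<in> ?G \<and> c \<in> ?Q}" by blast
    qed
    have s2: "{gadd (gadd a b) c | a b c. a \<in> fharm k 2 n \<and> b \<in> ?G \<and> c \<in> ?Q} \<subseteq> fharm k 1 n"
    proof
      fix u assume "u \<in> {gadd (gadd a b) c | a b c. a \<in> fharm k 2 n \<and> b \<in> ?G \<and> c \<in> ?Q}"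
      then obtain a b h where u: "u = gadd (gadd a b) (gmul (qq (cc k n) n) h)"
        and a: "a \<in> fharm k 2 n" and b: "b \<in> ?G" and h: "h \<in> fharm (k - 2) 2 n" by blast
      have "a \<in> fharm k 1 n" by (rule fharm_sub[OF assms a])
      moreover have "b \<in> fharm k 1 n" using G_sub(1)[OF assms _ b] kk by auto
      moreover have "gmul (qq (cc k n) n) h \<in> fharm k 1 n" using Q_elem[OF assms _ _ h] kk by auto
      ultimately show "u \<in> fharm k 1 n" unfolding u by (intro fharm_gadd)
    qed
    have s3: "\<forall>a\<in>fharm k 2 n. \<forall>b\<in>?G. \<forall>c\<in>?Q. gadd (gadd a b) c = gzero \<longrightarrow> a = gzero \<and> b = gzero \<and> c = gzero"
    proof (intro ballI impI)
      fix a b c assume a: "a \<in> fharm k 2 n" and b: "b \<in> ?G" and c: "c \<in> ?Q" and e: "gadd (gadd a b) c = gzero"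
      from c obtain h where h: "h \<in> fharm (k - 2) 2 n" and ch: "c = gmul (qq (cc k n) n) h" by blast
      show "a = gzero \<and> b = gzero \<and> c = gzero"
        using uniq[OF assms _ _ a b h] e kk unfolding ch by auto
    qed
    show "dsum3 (fharm k 1 n) (fharm k 2 n) ?G ?Q" unfolding dsum3_def using s1 s2 s3 by blast
  next
    show "dsum2 (fharm 1 1 n) (fharm 1 2 n) (fharm 1 1 1)" by (rule k1[OF assms])
  qed
qed


end
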